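(* Let $X,X_1,X_2,\dots$ be real random variables on a probability space $(\Omega,\mathcal{F},P)$, and let $F$ and $F_n$ be the distribution functions of $X$ and $X_n$. Suppose that $F$ is locally Lipschitz continuous at each continuity point of $F$, and that $\sum_{n=1}^\infty\|X_n-X\|_\infty<\infty$. Then for every continuity point $x$ of $F$, $\sum_{n=1}^\infty |F_n(x)-F(x)|<\infty$.
   Context: The distribution function of a random variable $Y$ is $x\mapsto P(Y\le x)$. $\|\cdot\|_\infty$ denotes the essential supremum norm, i.e. the $L^\infty(P)$ norm. "$F$ is locally Lipschitz continuous at $x$" means that there exist constants $K\ge 0$ and $\delta>0$ such that $|F(u)-F(v)|\le K|u-v|$ for all $u,v\in(x-\delta,x+\delta)$. *)

theory Defs
  imports "HOL-Probability.Probability"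
begin

definition locally_lipschitz_at :: "(real \<Rightarrow> real) \<Rightarrow> real \<Rightarrow> bool" where
  "locally_lipschitz_at F x \<longleftrightarrow>
     (\<exists>K \<ge> 0. \<exists>\<delta> > 0. \<forall>u \<in> {x - \<delta> <..< x + \<delta>}. \<forall>v \<in> {x - \<delta> <..< x + \<delta>}.
        \<bar>F u - F v\<bar> \<le> K * \<bar>u - v\<bar>)"

definition distr_fun :: "'a measure \<Rightarrow> ('a \<Rightarrow> real) \<Rightarrow> real \<Rightarrow> real" where
  "distr_fun M Y x = measure M {\<omega> \<in> space M. Y \<omega> \<le> x}"

definition Linf_norm :: "'a measure \<Rightarrow> ('a \<Rightarrow> real) \<Rightarrow> ereal" where
  "Linf_norm M Y = esssup M (\<lambda>\<omega>. ereal \<bar>Y \<omega>\<bar>)"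

end

theory Submission
  imports Defs
begin

theorem proposition3p1:
  fixes M :: "'a measure" and X :: "'a \<Rightarrow> real" and Xn :: "nat \<Rightarrow> 'a \<Rightarrow> real"
  assumes "prob_space M"
    and "X \<in> borel_measurable M"
    and "\<And>n. Xn n \<in> borel_measurable M"
    and "\<And>x. isCont (distr_fun M X) x \<Longrightarrow> locally_lipschitz_at (distr_fun M X) x"
    and "(\<Sum>n. Linf_norm M (\<lambda>\<omega>. Xn (Suc n) \<omega> - X \<omega>)) < \<infinity>"
  shows "\<And>x. isCont (distr_fun M X) x \<Longrightarrow>
           summable (\<lambda>n. \<bar>distr_fun M (Xn (Suc n)) x - distr_fun M X x\<bar>)"
proof -
  fix x assume cx: "isCont (distr_fun M X) x"
  interpret P: prob_space M by fact
  define L where "L n = Linf_norm M (\<lambda>\<omega>. Xn (Suc n) \<omega> - X \<omega>)" for n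
  define e where "e n = real_of_ereal (L n)" for n
  define F where "F = distr_fun M X"
  have L0: "0 \<le> L n" for n
  proof -
    have "esssup M (\<lambda>_. 0::ereal) \<le> L n"
      unfolding L_def Linf_norm_def by (rule esssup_mono) auto
    moreover have "esssup M (\<lambda>_. 0::ereal) = 0"
      by (rule esssup_const) (simp add: P.emeasure_space_1)
    ultimately show ?thesis by simp
  qed
  have Lfin: "suminf L \<noteq> \<infinity>" using assms(5) unfolding L_def by auto
  have Lne: "L n \<noteq> \<infinity>" for n using suminf_PInfty[OF L0 Lfin] .
  have Le: "L n = ereal (e n)" for n using L0[of n] Lne[of n] unfolding e_def
    by (cases "L n") auto
  have e0: "0 \<le> e n" for n using L0[of n] Le[of n] by simp
  have se: "summable e" unfolding e_def using summable_real_of_ereal[OF L0 Lfin] .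
  have AEn: "AE \<omega> in M. \<bar>Xn (Suc n) \<omega> - X \<omega>\<bar> \<le> e n" for n
  proof -
    have "AE \<omega> in M. ereal \<bar>Xn (Suc n) \<omega> - X \<omega>\<bar> \<le> L n"
      unfolding L_def Linf_norm_def by (rule esssup_AE)
    then show ?thesis by eventually_elim (simp add: Le)
  qed
  have meas: "{\<omega> \<in> space M. Y \<omega> \<le> t} \<in> sets M" if "Y \<in> borel_measurable M" for Y :: "'a \<Rightarrow> real" and t :: real
  proof -
    have "Y -` {..t} \<inter> space M \<in> sets M" using measurable_sets[OF that] by simp
    moreover have "Y -` {..t} \<inter> space M = {\<omega> \<in> space M. Y \<omega> \<le> t}" by auto
    ultimately show ?thesis by simp
  qed
  have up: "distr_fun M (Xn (Suc n)) x \<le> F (x + e n)" for n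
    unfolding distr_fun_def F_def
    by (rule P.finite_measure_mono_AE[OF _ meas[OF assms(2)]]) (use AEn[of n] in \<open>auto\<close>)
  have lo: "F (x - e n) \<le> distr_fun M (Xn (Suc n)) x" for n
    unfolding distr_fun_def F_def
    by (rule P.finite_measure_mono_AE[OF _ meas[OF assms(3)]]) (use AEn[of n] in \<open>auto\<close>)
  obtain K d where K: "K \<ge> 0" "d > 0"
    and Lip: "\<And>u v. u \<in> {x - d <..< x + d} \<Longrightarrow> v \<in> {x - d <..< x + d} \<Longrightarrow> \<bar>F u - F v\<bar> \<le> K * \<bar>u - v\<bar>"
    using assms(4)[OF cx] unfolding locally_lipschitz_at_def F_def by blast
  have "e \<longlonglongrightarrow> 0" using se by (rule summable_LIMSEQ_zero)
  then obtain N where N: "\<And>n. n \<ge> N \<Longrightarrow> \<bar>e n\<bar> < d"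
    using K(2) by (metis LIMSEQ_iff real_norm_def diff_zero)
  show "summable (\<lambda>n. \<bar>distr_fun M (Xn (Suc n)) x - distr_fun M X x\<bar>)"
  proof (rule summable_comparison_test'[where N=N])
    show "summable (\<lambda>n. K * e n)" using se by (rule summable_mult)
  next
    fix n assume "n \<ge> N"
    then have ed: "e n < d" using N by force
    have a: "\<bar>F (x + e n) - F x\<bar> \<le> K * e n"
      using Lip[of "x + e n" x] ed e0[of n] K by auto
    have b: "\<bar>F (x - e n) - F x\<bar> \<le> K * e n"
      using Lip[of "x - e n" x] ed e0[of n] K by auto
    show "norm \<bar>distr_fun M (Xn (Suc n)) x - distr_fun M X x\<bar> \<le> K * e n"
      using a b up[of n] lo[of n] unfolding F_def by auto
  qed
qed

end
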